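(* Let $G=\langle x\rangle\neq 1$ be a finite cyclic group and let $m\geq 2$ be an integer. Then $G$ admits an $m$-PDR of valency $3$ if and only if neither of the following holds: (i) $m=2$ and $o(x)<5$; (ii) $m=3$ and $o(x)=2$.
   Context: For a group $G$ and an integer $m\geq 2$, write $g_i$ for the element $(g,i)$ of $G\times\mathbb{Z}_m$. Given subsets $T_{i,j}\subseteq G$ for $i,j\in\mathbb{Z}_m$, the $m$-Cayley digraph $\mathrm{Cay}(G,T_{i,j}:i,j\in\mathbb{Z}_m)$ is the digraph with vertex set $G\times\mathbb{Z}_m$ and arc set $\bigcup_{i,j\in\mathbb{Z}_m}\{(g_i,(tg)_j): t\in T_{i,j},\, g\in G\}$. It is called an $m$-partite Cayley digraph if $T_{i,i}=\emptyset$ for all $i\in\mathbb{Z}_m$. A digraph is regular of valency $k$ if every vertex has out-valency $k$ and in-valency $k$. A group $G$ admits an $m$-PDR ($m$-partite digraphical representation) of valency $k$ if there exists an $m$-partite Cayley digraph $\Gamma$ over $G$ which is regular of valency $k$ and whose full automorphism group $\mathrm{Aut}(\Gamma)$ is isomorphic to $G$. $o(x)$ denotes the order of $x$. *)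

theory Defs
  imports "HOL-Algebra.Algebra"
begin

text \<open>Vertices of an m-Cayley digraph over G: pairs (g,i) with g in G and i in {0..<m}
  (the index set {0..<m} models Z_m).\<close>

definition mcay_verts :: "('a,'b) monoid_scheme \<Rightarrow> nat \<Rightarrow> ('a \<times> nat) set" where
  "mcay_verts G m = carrier G \<times> {..<m}"

definition mcay_arcs ::
  "('a,'b) monoid_scheme \<Rightarrow> nat \<Rightarrow> (nat \<Rightarrow> nat \<Rightarrow> 'a set) \<Rightarrow> (('a \<times> nat) \<times> ('a \<times> nat)) set" where
  "mcay_arcs G m T = {((g, i), (t \<otimes>\<^bsub>G\<^esub> g, j)) | g i j t.
      i < m \<and> j < m \<and> g \<in> carrier G \<and> t \<in> T i j}"

definition regular_digraph :: "'v set \<Rightarrow> ('v \<times> 'v) set \<Rightarrow> nat \<Rightarrow> bool" where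
  "regular_digraph V A k \<longleftrightarrow>
     (\<forall>v\<in>V. card {w. (v, w) \<in> A} = k \<and> card {u. (u, v) \<in> A} = k)"

definition digraph_auts :: "'v set \<Rightarrow> ('v \<times> 'v) set \<Rightarrow> ('v \<Rightarrow> 'v) set" where
  "digraph_auts V A = {f. bij_betw f V V \<and> f \<in> extensional V \<and>
      (\<forall>u\<in>V. \<forall>v\<in>V. (u, v) \<in> A \<longleftrightarrow> (f u, f v) \<in> A)}"

definition Aut_digraph :: "'v set \<Rightarrow> ('v \<times> 'v) set \<Rightarrow> ('v \<Rightarrow> 'v) monoid" where
  "Aut_digraph V A = \<lparr>carrier = digraph_auts V A, monoid.mult = (\<lambda>f g. compose V f g),
      monoid.one = restrict id V\<rparr>"

definition admits_mPDR :: "('a,'b) monoid_scheme \<Rightarrow> nat \<Rightarrow> nat \<Rightarrow> bool" where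
  "admits_mPDR G m k \<longleftrightarrow>
     (\<exists>T. (\<forall>i<m. \<forall>j<m. T i j \<subseteq> carrier G) \<and> (\<forall>i<m. T i i = {}) \<and>
          regular_digraph (mcay_verts G m) (mcay_arcs G m T) k \<and>
          G \<cong> Aut_digraph (mcay_verts G m) (mcay_arcs G m T))"

end

theory Submission
  imports Defs
begin

locale cycg = group G for G (structure) +
  fixes x :: 'a and m :: nat
  assumes fin: "finite (carrier G)" and xc: "x \<in> carrier G"
    and gen: "generate G {x} = carrier G"
    and ntriv: "carrier G \<noteq> {\<one>}" and m2: "m \<ge> 2"
begin

abbreviation n where "n \<equiv> ord x"

lemma n_card: "n = card (carrier G)"
  using generate_pow_card[OF xc] gen by simp

lemma carrier_pow: "g \<in> carrier G \<Longrightarrow> \<exists>k. g = x [^] (k::nat)"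
  using generate_pow_on_finite_carrier[OF fin xc] gen by auto

lemma n_ge2: "n \<ge> 2"
proof -
  have "\<one> \<in> carrier G" by simp
  moreover obtain y where "y \<in> carrier G" "y \<noteq> \<one>" using ntriv by blast
  ultimately have "{\<one>, y} \<subseteq> carrier G" by auto
  hence "card {\<one>, y} \<le> card (carrier G)" using fin card_mono by blast
  thus ?thesis using \<open>y \<noteq> \<one>\<close> n_card by simp
qed

lemma pow_mod: "x [^] (k::nat) = x [^] (k mod n)"
proof -
  have "x [^] k = x [^] (n * (k div n) + k mod n)" by simp
  also have "\<dots> = x [^] (n * (k div n)) \<otimes> x [^] (k mod n)"
    by (simp add: nat_pow_mult xc)
  also have "x [^] (n * (k div n)) = \<one>"
    by (simp add: pow_eq_id xc)
  finally show ?thesis using xc by simp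
qed

lemma pow_eq_iff: "x [^] (a::nat) = x [^] (b::nat) \<longleftrightarrow> a mod n = b mod n"
proof
  assume "x [^] a = x [^] b"
  hence "x [^] (a mod n) = x [^] (b mod n)" using pow_mod by metis
  moreover have "a mod n \<in> {0 .. n - 1}" "b mod n \<in> {0 .. n - 1}" using n_ge2
    by (auto simp: less_Suc_eq_le[symmetric])
  ultimately show "a mod n = b mod n" using ord_inj[OF xc] unfolding inj_on_def by blast
next
  assume "a mod n = b mod n" thus "x [^] a = x [^] b" using pow_mod by metis
qed

lemma comm: "g \<in> carrier G \<Longrightarrow> h \<in> carrier G \<Longrightarrow> g \<otimes> h = h \<otimes> g"
  using carrier_pow nat_pow_comm xc by metis

end

context cycg
begin

abbreviation V where "V \<equiv> mcay_verts G m"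

definition Phi :: "'a \<Rightarrow> ('a \<times> nat \<Rightarrow> 'a \<times> nat)" where
  "Phi h = restrict (\<lambda>v. (fst v \<otimes> h, snd v)) V"

lemma V_iff: "(g, i) \<in> V \<longleftrightarrow> g \<in> carrier G \<and> i < m"
  by (simp add: mcay_verts_def)

lemma finite_V: "finite V"
  using fin by (simp add: mcay_verts_def)

lemma arc_char:
  assumes T: "\<forall>i<m. \<forall>j<m. T i j \<subseteq> carrier G"
  shows "((g,i),(g',j)) \<in> mcay_arcs G m T \<longleftrightarrow>
     i < m \<and> j < m \<and> g \<in> carrier G \<and> g' \<in> carrier G \<and> g' \<otimes> inv g \<in> T i j"
proof
  assume "((g,i),(g',j)) \<in> mcay_arcs G m T"
  then obtain t where t: "i < m" "j < m" "g \<in> carrier G" "t \<in> T i j" "g' = t \<otimes> g"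
    unfolding mcay_arcs_def by auto
  hence tc: "t \<in> carrier G" using T by blast
  hence "g' \<otimes> inv g = t" using t by (simp add: m_assoc)
  thus "i < m \<and> j < m \<and> g \<in> carrier G \<and> g' \<in> carrier G \<and> g' \<otimes> inv g \<in> T i j"
    using t tc by auto
next
  assume a: "i < m \<and> j < m \<and> g \<in> carrier G \<and> g' \<in> carrier G \<and> g' \<otimes> inv g \<in> T i j"
  hence "g' = (g' \<otimes> inv g) \<otimes> g" by (simp add: m_assoc)
  thus "((g,i),(g',j)) \<in> mcay_arcs G m T"
    unfolding mcay_arcs_def using a by blast
qed

lemma arc_V:
  assumes T: "\<forall>i<m. \<forall>j<m. T i j \<subseteq> carrier G"
    and "(u, w) \<in> mcay_arcs G m T"
  shows "u \<in> V" "w \<in> V"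
  using assms arc_char[OF T, of "fst u" "snd u" "fst w" "snd w"]
  by (auto simp: mcay_verts_def mem_Times_iff)

lemma Phi_aut:
  assumes T: "\<forall>i<m. \<forall>j<m. T i j \<subseteq> carrier G" and h: "h \<in> carrier G"
  shows "Phi h \<in> digraph_auts V (mcay_arcs G m T)"
proof -
  have bij: "bij_betw (Phi h) V V"
  proof (rule bij_betwI[where g = "Phi (inv h)"])
    show "Phi h \<in> V \<rightarrow> V" using h by (auto simp: Phi_def mcay_verts_def)
    show "Phi (inv h) \<in> V \<rightarrow> V" using h by (auto simp: Phi_def mcay_verts_def)
    show "Phi (inv h) (Phi h v) = v" if "v \<in> V" for v
      using that h by (auto simp: Phi_def mcay_verts_def m_assoc)
    show "Phi h (Phi (inv h) v) = v" if "v \<in> V" for v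
      using that h by (auto simp: Phi_def mcay_verts_def m_assoc)
  qed
  have arcs: "(u, w) \<in> mcay_arcs G m T \<longleftrightarrow> (Phi h u, Phi h w) \<in> mcay_arcs G m T"
    if "u \<in> V" "w \<in> V" for u w
  proof -
    obtain g i where u: "u = (g, i)" "g \<in> carrier G" "i < m" using \<open>u \<in> V\<close>
      by (cases u) (auto simp: mcay_verts_def)
    obtain g' j where w: "w = (g', j)" "g' \<in> carrier G" "j < m" using \<open>w \<in> V\<close>
      by (cases w) (auto simp: mcay_verts_def)
    have e: "(g' \<otimes> h) \<otimes> inv (g \<otimes> h) = g' \<otimes> inv g"
      using u w h by (simp add: inv_mult_group m_assoc flip: m_assoc[of h "inv h"])
    show ?thesis
      using u w h e that by (simp add: Phi_def arc_char[OF T])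
  qed
  show ?thesis
    unfolding digraph_auts_def using bij arcs by (simp add: Phi_def)
qed

lemma auts_finite: "finite (digraph_auts V A)"
proof -
  have "digraph_auts V A \<subseteq> V \<rightarrow>\<^sub>E V"
    by (auto simp: digraph_auts_def bij_betw_def PiE_def extensional_def)
  moreover have "finite (V \<rightarrow>\<^sub>E V)" using finite_V by (simp add: finite_PiE)
  ultimately show ?thesis using finite_subset by blast
qed

lemma Phi_one_0: "h \<in> carrier G \<Longrightarrow> Phi h (\<one>, 0) = (h, 0)"
  using m2 by (simp add: Phi_def mcay_verts_def)

lemma Phi_inj: "inj_on Phi (carrier G)"
proof (rule inj_onI)
  fix a b assume "a \<in> carrier G" "b \<in> carrier G" "Phi a = Phi b"
  thus "a = b" using Phi_one_0 by (metis prod.inject)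
qed

lemma Phi_hom:
  assumes T: "\<forall>i<m. \<forall>j<m. T i j \<subseteq> carrier G"
  shows "Phi \<in> hom G (Aut_digraph V (mcay_arcs G m T))"
proof -
  have "Phi (a \<otimes> b) = compose V (Phi a) (Phi b)"
    if "a \<in> carrier G" "b \<in> carrier G" for a b
  proof
    fix v show "Phi (a \<otimes> b) v = compose V (Phi a) (Phi b) v"
    proof (cases "v \<in> V")
      case True
      then obtain g i where v: "v = (g,i)" "g \<in> carrier G" "i < m"
        by (cases v) (auto simp: mcay_verts_def)
      have "g \<otimes> (a \<otimes> b) = g \<otimes> b \<otimes> a"
        using that v comm[of a b] by (simp add: m_assoc)
      thus ?thesis using v that
        by (simp add: Phi_def compose_def mcay_verts_def)
    next
      case False thus ?thesis by (simp add: Phi_def compose_def)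
    qed
  qed
  thus ?thesis using Phi_aut[OF T]
    by (auto simp: hom_def Aut_digraph_def)
qed

lemma iso_if:
  assumes T: "\<forall>i<m. \<forall>j<m. T i j \<subseteq> carrier G"
    and surj: "\<And>\<tau>. \<tau> \<in> digraph_auts V (mcay_arcs G m T) \<Longrightarrow> \<exists>h\<in>carrier G. \<tau> = Phi h"
  shows "G \<cong> Aut_digraph V (mcay_arcs G m T)"
proof -
  have "Phi ` carrier G = digraph_auts V (mcay_arcs G m T)"
    using Phi_aut[OF T] surj by blast
  hence "bij_betw Phi (carrier G) (carrier (Aut_digraph V (mcay_arcs G m T)))"
    using Phi_inj by (simp add: bij_betw_def Aut_digraph_def)
  thus ?thesis using Phi_hom[OF T] by (auto intro!: is_isoI isoI)
qed

lemma not_iso: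
  assumes T: "\<forall>i<m. \<forall>j<m. T i j \<subseteq> carrier G"
    and s: "\<sigma> \<in> digraph_auts V (mcay_arcs G m T)" and s0: "snd (\<sigma> (\<one>, 0)) \<noteq> 0"
  shows "\<not> G \<cong> Aut_digraph V (mcay_arcs G m T)"
proof
  let ?A = "digraph_auts V (mcay_arcs G m T)"
  assume "G \<cong> Aut_digraph V (mcay_arcs G m T)"
  then obtain f where "bij_betw f (carrier G) ?A"
    by (auto simp: is_iso_def iso_def Aut_digraph_def)
  hence c: "card ?A = card (carrier G)" by (simp add: bij_betw_same_card)
  have sub: "insert \<sigma> (Phi ` carrier G) \<subseteq> ?A" using s Phi_aut[OF T] by blast
  have "\<sigma> \<notin> Phi ` carrier G" using s0 Phi_one_0 by auto
  hence "card (insert \<sigma> (Phi ` carrier G)) = Suc (card (carrier G))"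
    using fin Phi_inj by (simp add: card_image)
  moreover have "card (insert \<sigma> (Phi ` carrier G)) \<le> card ?A"
    using card_mono[OF auts_finite sub] .
  ultimately show False using c by simp
qed

end

lemma mod2_iff:
  fixes y z m k :: nat
  assumes "0 < m"
  shows "(y mod m = z mod m \<and> y div m mod k = z div m mod k) \<longleftrightarrow> y mod (m*k) = z mod (m*k)"
proof
  assume "y mod m = z mod m \<and> y div m mod k = z div m mod k"
  thus "y mod (m*k) = z mod (m*k)" by (simp add: mod_mult2_eq)
next
  assume a: "y mod (m*k) = z mod (m*k)"
  have "y mod m = y mod (m*k) mod m" by (simp add: mod_mod_cancel)
  moreover have "z mod m = z mod (m*k) mod m" by (simp add: mod_mod_cancel)
  ultimately have 1: "y mod m = z mod m" using a by simp
  have "y div m mod k = y mod (m*k) div m" using assms by (simp add: mod_mult2_eq)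
  moreover have "z div m mod k = z mod (m*k) div m" using assms by (simp add: mod_mult2_eq)
  ultimately show "y mod m = z mod m \<and> y div m mod k = z div m mod k" using a 1 by simp
qed

lemma mod_add_lcancel_nat:
  fixes i a b N :: nat
  shows "(i + a) mod N = (i + b) mod N \<longleftrightarrow> a mod N = b mod N"
  by (simp add: nat_mod_eq_iff add.assoc)

context cycg
begin

definition succ :: "'a \<times> nat \<Rightarrow> 'a \<times> nat" where
  "succ v = (if snd v < m - 1 then (fst v, Suc (snd v)) else (x \<otimes> fst v, 0))"

abbreviation NN where "NN \<equiv> n * m"

lemma m_pos: "0 < m" using m2 by simp

lemma NN_pos: "0 < NN" using m2 n_ge2 by simp

lemma succ_pow:
  assumes "g \<in> carrier G" "i < m"
  shows "(succ ^^ d) (g, i) = (x [^] ((i + d) div m) \<otimes> g, (i + d) mod m)"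
proof (induction d)
  case 0
  thus ?case using assms by simp
next
  case (Suc d)
  define y where "y = i + d"
  have ym: "y mod m < m" using m_pos by simp
  show ?case
  proof (cases "y mod m < m - 1")
    case True
    hence "Suc y mod m = Suc (y mod m)" "Suc y div m = y div m"
      by (auto simp: mod_Suc div_Suc)
    thus ?thesis using Suc True by (simp add: succ_def y_def[symmetric])
  next
    case False
    hence e: "y mod m = m - 1" using ym by simp
    hence "Suc y mod m = 0" "Suc y div m = Suc (y div m)" using m_pos
      by (auto simp: mod_Suc div_Suc)
    moreover have "x \<otimes> (x [^] (y div m) \<otimes> g) = x [^] Suc (y div m) \<otimes> g"
      using assms xc by (subst nat_pow_Suc2[OF xc]) (simp add: m_assoc)
    ultimately show ?thesis using Suc False by (simp add: succ_def y_def[symmetric])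
  qed
qed

lemma succ_pow_V: "v \<in> V \<Longrightarrow> (succ ^^ d) v \<in> V"
  using succ_pow[of "fst v" "snd v" d] m_pos xc
  by (cases v) (auto simp: mcay_verts_def)

lemma succ_V: "v \<in> V \<Longrightarrow> succ v \<in> V"
  using succ_pow_V[of v 1] by simp

lemma succ_pow_eq:
  assumes "v \<in> V"
  shows "(succ ^^ a) v = (succ ^^ b) v \<longleftrightarrow> a mod NN = b mod NN"
proof -
  obtain g i where v: "v = (g, i)" "g \<in> carrier G" "i < m"
    using assms by (cases v) (auto simp: mcay_verts_def)
  have "(succ ^^ a) v = (succ ^^ b) v \<longleftrightarrow>
        x [^] ((i + a) div m) = x [^] ((i + b) div m) \<and> (i + a) mod m = (i + b) mod m"
    using v xc by (simp add: succ_pow)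
  also have "\<dots> \<longleftrightarrow> ((i + a) mod m = (i + b) mod m \<and> (i + a) div m mod n = (i + b) div m mod n)"
    by (auto simp: pow_eq_iff)
  also have "\<dots> \<longleftrightarrow> (i + a) mod (m * n) = (i + b) mod (m * n)"
    using mod2_iff[OF m_pos] by blast
  also have "\<dots> \<longleftrightarrow> a mod NN = b mod NN"
    by (simp add: mod_add_lcancel_nat mult.commute)
  finally show ?thesis .
qed

lemma all_succ:
  assumes "v \<in> V"
  shows "\<exists>p. v = (succ ^^ p) (\<one>, 0)"
proof -
  obtain g i where v: "v = (g, i)" "g \<in> carrier G" "i < m"
    using assms by (cases v) (auto simp: mcay_verts_def)
  obtain k where k: "g = x [^] (k::nat)" using carrier_pow v by blast
  have "(succ ^^ (k * m + i)) (\<one>, 0) = (x [^] ((k * m + i) div m) \<otimes> \<one>, (k * m + i) mod m)"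
    using succ_pow[of \<one> 0] m_pos by simp
  also have "\<dots> = (g, i)" using v k m_pos xc by simp
  finally show ?thesis using v by metis
qed

lemma succ_qm:
  assumes "g \<in> carrier G" "i < m"
  shows "(succ ^^ (q * m)) (g, i) = (g \<otimes> x [^] (q::nat), i)"
proof -
  have "(i + q * m) div m = q" "(i + q * m) mod m = i" using assms m_pos by auto
  thus ?thesis using assms succ_pow[of g i "q*m"] comm[of g "x [^] q"] xc by simp
qed

definition TD :: "(nat \<Rightarrow> nat set) \<Rightarrow> nat \<Rightarrow> nat \<Rightarrow> 'a set" where
  "TD D i j = {x [^] ((i + d) div m) | d. d \<in> D i \<and> (i + d) mod m = j}"

lemma TD_sub: "TD D i j \<subseteq> carrier G"
  using xc by (auto simp: TD_def)

lemma TD_sub': "\<forall>i<m. \<forall>j<m. TD D i j \<subseteq> carrier G"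
  using TD_sub by blast

lemma arcD:
  assumes "v \<in> V"
  shows "(v, w) \<in> mcay_arcs G m (TD D) \<longleftrightarrow> (\<exists>d\<in>D (snd v). w = (succ ^^ d) v)"
proof -
  obtain g i where v: "v = (g, i)" "g \<in> carrier G" "i < m"
    using assms by (cases v) (auto simp: mcay_verts_def)
  show ?thesis
    using v m_pos apply (auto simp: mcay_arcs_def TD_def succ_pow)
    by blast
qed

end

locale dcon = cycg +
  fixes D :: "nat \<Rightarrow> nat set" and Es :: "nat set"
  assumes D_sub: "\<And>i. i < m \<Longrightarrow> D i \<subseteq> {..<NN}"
    and D_card: "\<And>i. i < m \<Longrightarrow> card (D i) = 3"
    and D_nz: "\<And>i d. i < m \<Longrightarrow> d \<in> D i \<Longrightarrow> d mod m \<noteq> 0"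
    and D_one: "\<And>i. i < m \<Longrightarrow> 1 \<in> D i"
    and D_spine: "\<And>i d'. i < m \<Longrightarrow> d' \<in> D (Suc i mod m) \<Longrightarrow> Suc d' mod NN \<noteq> 0"
    and D_rec: "\<And>i d. i < m \<Longrightarrow> d \<in> D i \<Longrightarrow> d \<noteq> 1 \<Longrightarrow>
                  \<exists>d'\<in>D ((i + d) mod m). (d + d') mod NN = 0"
    and D_Q: "\<And>i. i < m \<Longrightarrow> (\<forall>e\<in>Es. \<exists>d\<in>D i. d = e mod NN) \<longleftrightarrow> i = 0"
begin

abbreviation AA where "AA \<equiv> mcay_arcs G m (TD D)"

lemma snd_V: "v \<in> V \<Longrightarrow> snd v < m"
  by (auto simp: mcay_verts_def)

lemma snd_succ_pow: "v \<in> V \<Longrightarrow> snd ((succ ^^ d) v) = (snd v + d) mod m"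
  using succ_pow[of "fst v" "snd v" d] by (cases v) (auto simp: mcay_verts_def)

lemma succ_pow_comp: "(succ ^^ a) ((succ ^^ b) v) = (succ ^^ (a + b)) v"
  by (simp add: funpow_add)

lemma NR:
  assumes u: "u \<in> V"
  shows "((u, w) \<in> AA \<and> (w, u) \<notin> AA) \<longleftrightarrow> w = succ u"
proof
  assume a: "(u, w) \<in> AA \<and> (w, u) \<notin> AA"
  then obtain d where d: "d \<in> D (snd u)" "w = (succ ^^ d) u" using arcD[OF u] by blast
  have wV: "w \<in> V" using d u succ_pow_V by simp
  show "w = succ u"
  proof (cases "d = 1")
    case True thus ?thesis using d by simp
  next
    case False
    then obtain d' where d': "d' \<in> D ((snd u + d) mod m)" "(d + d') mod NN = 0"
      using D_rec[OF snd_V[OF u] d(1)] by metis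
    have "(succ ^^ d') w = (succ ^^ (d' + d)) u" using d by (simp add: succ_pow_comp)
    also have "\<dots> = (succ ^^ 0) u" using succ_pow_eq[OF u, of "d' + d" 0] d'(2)
      by (simp add: add.commute)
    finally have wu: "(succ ^^ d') w = u" by simp
    have "snd w = (snd u + d) mod m" using snd_succ_pow[OF u] d by simp
    hence "d' \<in> D (snd w)" using d' by simp
    hence "(w, u) \<in> AA" unfolding arcD[OF wV] using wu by metis
    thus ?thesis using a by simp
  qed
next
  assume w: "w = succ u"
  have "(u, w) \<in> AA" unfolding arcD[OF u] using D_one[OF snd_V[OF u]] w
    by (intro bexI[of _ 1]) auto
  moreover have "(w, u) \<notin> AA"
  proof
    assume wu: "(w, u) \<in> AA"
    have wV: "w \<in> V" using w succ_V u by simp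
    obtain d' where d': "d' \<in> D (snd w)" "u = (succ ^^ d') w" using wu unfolding arcD[OF wV] by blast
    have sw: "snd w = Suc (snd u) mod m" using snd_succ_pow[OF u, of 1] w by simp
    have e1: "(succ ^^ (d' + 1)) u = (succ ^^ d') ((succ ^^ 1) u)" by (simp only: succ_pow_comp)
    have e2: "(succ ^^ 1) u = w" using w by simp
    have "(succ ^^ (d' + 1)) u = u" by (simp only: e1 e2 d'(2)[symmetric])
    hence "(succ ^^ 0) u = (succ ^^ (d' + 1)) u" by simp
    hence "0 mod NN = (d' + 1) mod NN" using succ_pow_eq[OF u, of 0 "d' + 1"] by blast
    hence "Suc d' mod NN = 0" by simp
    moreover have "d' \<in> D (Suc (snd u) mod m)" using d' sw by simp
    ultimately show False using D_spine[OF snd_V[OF u]] by metis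
  qed
  ultimately show "(u, w) \<in> AA \<and> (w, u) \<notin> AA" by simp
qed

lemma out_set: "u \<in> V \<Longrightarrow> {w. (u, w) \<in> AA} = (\<lambda>d. (succ ^^ d) u) ` D (snd u)"
  using arcD by auto

lemma out_card: assumes u: "u \<in> V" shows "card {w. (u, w) \<in> AA} = 3"
proof -
  have "inj_on (\<lambda>d. (succ ^^ d) u) (D (snd u))"
  proof (rule inj_onI)
    fix a b assume "a \<in> D (snd u)" "b \<in> D (snd u)" "(succ ^^ a) u = (succ ^^ b) u"
    moreover have "a < NN" "b < NN" using calculation D_sub[OF snd_V[OF u]] by auto
    ultimately show "a = b" using succ_pow_eq[OF u] by simp
  qed
  thus ?thesis using out_set[OF u] D_card[OF snd_V[OF u]] by (simp add: card_image)
qed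

lemma out_finite: "finite {w. (u, w) \<in> AA}"
proof -
  have "{w. (u, w) \<in> AA} \<subseteq> V" using arc_V(2)[OF TD_sub'] by blast
  thus ?thesis using finite_V finite_subset by blast
qed

lemma in_card: assumes v: "v \<in> V" shows "card {u. (u, v) \<in> AA} = 3"
proof -
  define p where "p = (succ ^^ (NN - 1)) v"
  have pV: "p \<in> V" using succ_pow_V v p_def by simp
  have sp: "succ p = v"
  proof -
    have "succ p = (succ ^^ (1 + (NN - 1))) v" by (simp add: p_def funpow_add)
    also have "1 + (NN - 1) = NN" using NN_pos by simp
    also have "(succ ^^ NN) v = (succ ^^ 0) v" using succ_pow_eq[OF v, of NN 0] by simp
    finally show ?thesis by simp
  qed
  have pred_uniq: "u = p" if "u \<in> V" "succ u = v" for u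
  proof -
    have "u = (succ ^^ 0) u" by simp
    also have "\<dots> = (succ ^^ (NN - 1 + 1)) u"
      using succ_pow_eq[OF \<open>u \<in> V\<close>, of 0 "NN - 1 + 1"] NN_pos by (simp del: funpow.simps)
    also have "\<dots> = (succ ^^ (NN - 1)) (succ u)" by (simp only: funpow_add) simp
    finally show ?thesis using that p_def by metis
  qed
  have eq: "{u. (u, v) \<in> AA} = insert p ({w. (v, w) \<in> AA} - {succ v})"
  proof (intro Set.set_eqI iffI)
    fix u assume "u \<in> {u. (u, v) \<in> AA}"
    hence uv: "(u, v) \<in> AA" by simp
    hence uV: "u \<in> V" using arc_V(1)[OF TD_sub'] by blast
    show "u \<in> insert p ({w. (v, w) \<in> AA} - {succ v})"
    proof (cases "(v, u) \<in> AA")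
      case False
      hence "v = succ u" using NR[OF uV] uv by blast
      thus ?thesis using pred_uniq uV by simp
    next
      case True
      have "u \<noteq> succ v" using NR[OF v, of u] True uv by blast
      thus ?thesis using True by simp
    qed
  next
    fix u assume "u \<in> insert p ({w. (v, w) \<in> AA} - {succ v})"
    thus "u \<in> {u. (u, v) \<in> AA}"
    proof
      assume "u = p" thus ?thesis using NR[OF pV, of v] sp by simp
    next
      assume "u \<in> {w. (v, w) \<in> AA} - {succ v}"
      thus ?thesis using NR[OF v, of u] by auto
    qed
  qed
  have pn: "p \<notin> {w. (v, w) \<in> AA} - {succ v}"
  proof
    assume "p \<in> {w. (v, w) \<in> AA} - {succ v}"
    hence "(v, p) \<in> AA" by simp
    thus False using NR[OF pV, of v] sp by simp
  qed
  have sv: "succ v \<in> {w. (v, w) \<in> AA}" using NR[OF v, of "succ v"] by simp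
  have "card ({w. (v, w) \<in> AA} - {succ v}) = 2"
    using out_card[OF v] sv out_finite by (simp add: card_Diff_singleton)
  thus ?thesis using eq pn out_finite by simp
qed

lemma regular: "regular_digraph V AA 3"
  unfolding regular_digraph_def using out_card in_card by simp

lemma TD_diag: "i < m \<Longrightarrow> TD D i i = {}"
proof -
  assume i: "i < m"
  have False if "d \<in> D i" "(i + d) mod m = i" for d
  proof -
    have "(i + d) mod m = (i + 0) mod m" using that i by simp
    hence "d mod m = 0 mod m" by (simp only: mod_add_lcancel_nat)
    thus False using D_nz[OF i that(1)] by simp
  qed
  thus ?thesis by (auto simp: TD_def)
qed

lemma aut_is_Phi:
  assumes t: "\<tau> \<in> digraph_auts V AA"
  shows "\<exists>h\<in>carrier G. \<tau> = Phi h"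
proof -
  have bij: "bij_betw \<tau> V V" and ext: "\<tau> \<in> extensional V"
    and arcs: "\<And>u w. u \<in> V \<Longrightarrow> w \<in> V \<Longrightarrow> (u, w) \<in> AA \<longleftrightarrow> (\<tau> u, \<tau> w) \<in> AA"
    using t by (auto simp: digraph_auts_def)
  have tV: "\<tau> u \<in> V" if "u \<in> V" for u using bij that bij_betwE by blast
  have tcomm: "\<tau> (succ u) = succ (\<tau> u)" if u: "u \<in> V" for u
  proof -
    have suV: "succ u \<in> V" using succ_V u by simp
    have "(u, succ u) \<in> AA \<and> (succ u, u) \<notin> AA" using NR[OF u] by simp
    hence "(\<tau> u, \<tau> (succ u)) \<in> AA \<and> (\<tau> (succ u), \<tau> u) \<notin> AA"
      using arcs[OF u suV] arcs[OF suV u] by simp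
    thus ?thesis using NR[OF tV[OF u]] by simp
  qed
  have tpow: "\<tau> ((succ ^^ k) u) = (succ ^^ k) (\<tau> u)" if u: "u \<in> V" for u k
  proof (induction k)
    case 0 show ?case by simp
  next
    case (Suc k)
    have "\<tau> ((succ ^^ Suc k) u) = \<tau> (succ ((succ ^^ k) u))" by simp
    also have "\<dots> = succ (\<tau> ((succ ^^ k) u))" using tcomm succ_pow_V u by simp
    finally show ?case using Suc by simp
  qed
  define v0 where "v0 = (\<one>, (0::nat))"
  have v0V: "v0 \<in> V" using m_pos by (simp add: v0_def mcay_verts_def)
  obtain h j where hj: "\<tau> v0 = (h, j)" by (cases "\<tau> v0")
  have hjV: "(h, j) \<in> V" using tV[OF v0V] hj by simp
  hence hc: "h \<in> carrier G" and jm: "j < m" by (auto simp: mcay_verts_def)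
  have "\<forall>e\<in>Es. \<exists>d\<in>D j. d = e mod NN"
  proof
    fix e assume e: "e \<in> Es"
    obtain d where d: "d \<in> D 0" "d = e mod NN" using D_Q[OF m_pos] e by metis
    have "(succ ^^ e) v0 = (succ ^^ d) v0" using succ_pow_eq[OF v0V] d by simp
    hence "(v0, (succ ^^ e) v0) \<in> AA" using arcD[OF v0V] d by (auto simp: v0_def)
    hence "(\<tau> v0, \<tau> ((succ ^^ e) v0)) \<in> AA" using arcs v0V succ_pow_V by blast
    hence "((h, j), (succ ^^ e) (h, j)) \<in> AA" using tpow[OF v0V] hj by simp
    then obtain d' where d': "d' \<in> D j" "(succ ^^ e) (h, j) = (succ ^^ d') (h, j)"
      using arcD[OF hjV] by auto
    hence "d' = e mod NN" using succ_pow_eq[OF hjV] D_sub[OF jm] by auto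
    thus "\<exists>d\<in>D j. d = e mod NN" using d' by metis
  qed
  hence j0: "j = 0" using D_Q[OF jm] by metis
  obtain q where q: "h = x [^] (q::nat)" using carrier_pow hc by blast
  have hq: "(h, j) = (succ ^^ (q * m)) v0"
    using succ_qm[of \<one> 0 q] m_pos xc q j0 by (simp add: v0_def)
  have "\<tau> v = Phi h v" for v
  proof (cases "v \<in> V")
    case True
    obtain p where p: "v = (succ ^^ p) v0" using all_succ[OF True] v0_def by blast
    have "\<tau> v = (succ ^^ p) ((succ ^^ (q * m)) v0)" using tpow[OF v0V] p hj hq by simp
    also have "\<dots> = (succ ^^ (q * m)) v" using p by (simp add: succ_pow_comp add.commute)
    also have "\<dots> = (fst v \<otimes> h, snd v)"
      using True succ_qm[of "fst v" "snd v" q] q by (cases v) (auto simp: mcay_verts_def)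
    finally show ?thesis using True by (simp add: Phi_def)
  next
    case False thus ?thesis using extensional_arb[OF ext False] by (simp add: Phi_def)
  qed
  thus ?thesis using hc by blast
qed

theorem admits: "admits_mPDR G m 3"
  unfolding admits_mPDR_def
proof (intro exI conjI)
  show "\<forall>i<m. \<forall>j<m. TD D i j \<subseteq> carrier G" using TD_sub by blast
  show "\<forall>i<m. TD D i i = {}" using TD_diag by blast
  show "regular_digraph V AA 3" using regular .
  show "G \<cong> Aut_digraph V AA" using iso_if[OF TD_sub'] aut_is_Phi by blast
qed

end

lemma card3: "a \<noteq> b \<Longrightarrow> a \<noteq> c \<Longrightarrow> b \<noteq> c \<Longrightarrow> card {a, b, c} = 3"
  by simp

context cycg
begin

lemma dcon_intro:
  assumes "dcon_axioms G x m D Es"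
  shows "admits_mPDR G m 3"
proof -
  have "dcon G x m D Es" by (intro dcon.intro cycg_axioms assms)
  thus ?thesis by (rule dcon.admits)
qed

lemma rec_helper:
  fixes N d :: nat
  assumes "d < N" "N - d \<in> D j"
  shows "\<exists>d'\<in>D j. (d + d') mod N = 0"
  using assms by (intro bexI[of _ "N - d"]) auto

lemma caseB:
  assumes m3: "m \<ge> 3" and n3: "n \<ge> 3"
  shows "admits_mPDR G m 3"
proof -
  define N where "N = NN"
  define D where "D = (\<lambda>i::nat. {1::nat, if i = m - 1 then N - m + 1 else m + 1,
                                  if i = 0 then m - 1 else N - m - 1})"
  have N3: "N \<ge> 3 * m" using n3 by (simp add: N_def)
  have e1: "N - m + 1 = (n - 1) * m + 1" using n3 by (simp add: diff_mult_distrib N_def)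
  have e2: "N - m - 1 = (n - 2) * m + (m - 1)" using n3 m3
    by (simp add: diff_mult_distrib N_def)
  have mod1: "(N - m + 1) mod m = 1"
  proof -
    have "(N - m + 1) mod m = ((n - 1) * m + 1) mod m" using e1 by simp
    also have "\<dots> = 1 mod m" by (rule mod_mult_self3)
    finally show ?thesis using m3 by simp
  qed
  have mod2: "(N - m - 1) mod m = m - 1"
  proof -
    have "(N - m - 1) mod m = ((n - 2) * m + (m - 1)) mod m" using e2 by simp
    also have "\<dots> = (m - 1) mod m" by (rule mod_mult_self3)
    finally show ?thesis using m3 by simp
  qed
  have Dcases: "d \<in> D i \<longleftrightarrow> d = 1 \<or> (i = m - 1 \<and> d = N - m + 1) \<or> (i \<noteq> m - 1 \<and> d = m + 1)
        \<or> (i = 0 \<and> d = m - 1) \<or> (i \<noteq> 0 \<and> d = N - m - 1)" for d i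
    by (auto simp: D_def)
  have bound: "d \<in> D i \<Longrightarrow> d + 1 < N \<and> 0 < d" for d i
    using N3 m3 by (auto simp: Dcases)
  have ax: "dcon_axioms G x m D {m - 1}"
  proof (unfold dcon_axioms_def N_def[symmetric], intro conjI allI impI iffI)
    fix i assume i: "i < m"
    show "D i \<subseteq> {..<N}" using bound by fastforce
    show "card (D i) = 3"
    proof (cases "i = 0")
      case True
      hence "D i = {1, m + 1, m - 1}" using m3 by (simp add: D_def)
      thus ?thesis using m3 by simp
    next
      case False
      show ?thesis
      proof (cases "i = m - 1")
        case True
        hence "D i = {1, N - m + 1, N - m - 1}" using False by (simp add: D_def)
        thus ?thesis using N3 m3 by simp
      next
        case False2: False
        hence "D i = {1, m + 1, N - m - 1}" using False by (simp add: D_def)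
        thus ?thesis using N3 m3 by simp
      qed
    qed
    show "1 \<in> D i" by (simp add: D_def)
    show "\<forall>e\<in>{m - 1}. \<exists>d\<in>D i. d = e mod N \<Longrightarrow> i = 0"
    proof (rule ccontr)
      assume h: "\<forall>e\<in>{m - 1}. \<exists>d\<in>D i. d = e mod N" and i0: "i \<noteq> 0"
      have "(m - 1) mod N = m - 1" using N3 m3 by simp
      hence "m - 1 \<in> D i" using h by auto
      thus False using i0 N3 m3 n3 by (auto simp: Dcases)
    qed
    show "i = 0 \<Longrightarrow> \<forall>e\<in>{m - 1}. \<exists>d\<in>D i. d = e mod N"
      using N3 m3 by (simp add: D_def)
  next
    fix i d assume i: "i < m" and d: "d \<in> D i"
    have modm1: "Suc m mod m = 1" using m3 by (simp add: mod_Suc)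
    show "d mod m \<noteq> 0" using d m3 mod1 mod2 modm1 by (auto simp: Dcases)
  next
    fix i d' assume "i < m" "d' \<in> D (Suc i mod m)"
    thus "Suc d' mod N \<noteq> 0" using bound[of d'] by simp
  next
    fix i d assume i: "i < m" and d: "d \<in> D i" and d1: "d \<noteq> 1"
    have dN: "d < N" using bound[OF d] by simp
    show "\<exists>d'\<in>D ((i + d) mod m). (d + d') mod N = 0"
    proof (rule rec_helper[OF dN])
      consider "i = m - 1" "d = N - m + 1" | "i \<noteq> m - 1" "d = m + 1"
        | "i = 0" "d = m - 1" | "i \<noteq> 0" "d = N - m - 1"
        using d d1 by (auto simp: Dcases)
      thus "N - d \<in> D ((i + d) mod m)"
      proof cases
        case 1
        have "(i + d) mod m = 0" using 1 m3 e1 by simp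
        moreover have "N - d = m - 1" using 1 N3 m3 by simp
        ultimately show ?thesis by (simp add: D_def)
      next
        case 2
        have "(i + d) mod m = (i + 1 + m) mod m" using 2 by simp
        also have "\<dots> = (i + 1) mod m" by (rule mod_add_self2)
        also have "\<dots> = i + 1" using 2 i by simp
        finally have "(i + d) mod m = i + 1" .
        moreover have "N - d = N - m - 1" using 2 by simp
        ultimately show ?thesis by (simp add: D_def)
      next
        case 3
        have "(i + d) mod m = m - 1" using 3 m3 by simp
        moreover have "N - d = N - m + 1" using 3 N3 m3 by simp
        ultimately show ?thesis by (simp add: D_def)
      next
        case 4
        have nm: "(n - 1) * m = (n - 2) * m + m"
        proof -
          have "n - 1 = Suc (n - 2)" using n3 by simp
          thus ?thesis by simp
        qed
        have "i + d = (n - 2) * m + m + (i - 1)" using 4 e2 i by simp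
        hence "i + d = (n - 1) * m + (i - 1)" using nm by simp
        hence "(i + d) mod m = (i - 1) mod m" by (simp only: mod_mult_self3)
        hence "(i + d) mod m = i - 1" using i by simp
        moreover have "N - d = m + 1" using 4 N3 m3 by simp
        moreover have "i - 1 \<noteq> m - 1" using 4 i by simp
        ultimately show ?thesis by (simp add: D_def)
      qed
    qed
  qed
  thus ?thesis by (rule dcon_intro)
qed

lemma caseA:
  assumes m2': "m = 2" and n5: "n \<ge> 5"
  shows "admits_mPDR G m 3"
proof -
  define N where "N = NN"
  define D where "D = (\<lambda>i::nat. if i = 0 then {1::nat, 3, 5} else {1, N - 3, N - 5})"
  have N2: "N = 2 * n" using m2' by (simp add: N_def)
  have N10: "N \<ge> 10" using N2 n5 by simp
  have o3: "N - 3 = 2 * (n - 2) + 1" using N2 n5 by simp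
  have o5: "N - 5 = 2 * (n - 3) + 1" using N2 n5 by simp
  have i01: "i < m \<Longrightarrow> i = 0 \<or> i = 1" for i using m2' by auto
  have ax: "dcon_axioms G x m D {3}"
  proof (unfold dcon_axioms_def N_def[symmetric], intro conjI allI impI iffI)
    fix i assume i: "i < m"
    show "D i \<subseteq> {..<N}" using N10 by (auto simp: D_def)
    show "card (D i) = 3" using N10 by (auto simp: D_def intro!: card3)
    show "1 \<in> D i" by (simp add: D_def)
    show "i = 0" if h: "\<forall>e\<in>{3}. \<exists>d\<in>D i. d = e mod N"
    proof (rule ccontr)
      assume "i \<noteq> 0"
      moreover have "3 mod N = 3" using N10 by simp
      ultimately have "(3::nat) \<in> {1, N - 3, N - 5}" using h by (auto simp: D_def)
      thus False using N10 by auto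
    qed
    show "\<forall>e\<in>{3}. \<exists>d\<in>D i. d = e mod N" if "i = 0"
      using that N10 by (simp add: D_def)
  next
    fix i d assume i: "i < m" and d: "d \<in> D i"
    show "d mod m \<noteq> 0" using d o3 o5 m2' by (auto simp: D_def split: if_splits)
  next
    fix i d' assume "i < m" "d' \<in> D (Suc i mod m)"
    thus "Suc d' mod N \<noteq> 0" using N10 by (auto simp: D_def split: if_splits)
  next
    fix i d assume i: "i < m" and d: "d \<in> D i" and d1: "d \<noteq> 1"
    have dN: "d < N" using d N10 by (auto simp: D_def split: if_splits)
    show "\<exists>d'\<in>D ((i + d) mod m). (d + d') mod N = 0"
    proof (rule rec_helper[OF dN])
      consider "i = 0" "d = 3" | "i = 0" "d = 5" | "i = 1" "d = N - 3" | "i = 1" "d = N - 5"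
        using i01[OF i] d d1 by (auto simp: D_def)
      thus "N - d \<in> D ((i + d) mod m)"
      proof cases
        case 1 thus ?thesis using m2' N10 by (simp add: D_def)
      next
        case 2 thus ?thesis using m2' N10 by (simp add: D_def)
      next
        case 3
        have "i + d = 2 * (n - 1)" using 3 o3 n5 by simp
        hence "(i + d) mod m = 0" using m2' by simp
        moreover have "N - d = 3" using 3 N10 by simp
        ultimately show ?thesis by (simp add: D_def)
      next
        case 4
        have "i + d = 2 * (n - 2)" using 4 o5 n5 by simp
        hence "(i + d) mod m = 0" using m2' by simp
        moreover have "N - d = 5" using 4 N10 by simp
        ultimately show ?thesis by (simp add: D_def)
      qed
    qed
  qed
  thus ?thesis by (rule dcon_intro)
qed

lemma caseC:
  assumes n2: "n = 2" and m4: "m \<ge> 4"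
  shows "admits_mPDR G m 3"
proof -
  define N where "N = NN"
  define D where "D = (\<lambda>i::nat. if i = 0 then {1::nat, 2, m - 1} else if i = 1 then {1, 2, m + 1}
     else if i = 2 then {1, m - 1, N - 2} else if i = 3 then {1, m + 1, N - 2} else {1, m - 1, m + 1})"
  have N2: "N = 2 * m" using n2 by (simp add: N_def)
  have D0: "D 0 = {1, 2, m - 1}" by (simp add: D_def)
  have D1: "D 1 = {1, 2, m + 1}" by (simp add: D_def)
  have D1': "D (Suc 0) = {1, 2, m + 1}" by (simp add: D_def)
  have D2: "D 2 = {1, m - 1, N - 2}" by (simp add: D_def)
  have D3: "D 3 = {1, m + 1, N - 2}" by (simp add: D_def)
  have D4: "i \<ge> 4 \<Longrightarrow> D i = {1, m - 1, m + 1}" for i by (simp add: D_def)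
  have icases: "i = 0 \<or> i = 1 \<or> i = 2 \<or> i = 3 \<or> i \<ge> 4" for i :: nat by auto
  have bound: "d \<in> D i \<Longrightarrow> d + 1 < N \<and> 0 < d" for d i
    using N2 m4 by (auto simp: D_def split: if_splits)
  have modN2: "(N - 2) mod m = m - 2"
  proof -
    have "N - 2 = (m - 2) + 1 * m" using N2 m4 by simp
    hence "(N - 2) mod m = (m - 2) mod m" by (simp only: mod_mult_self1)
    thus ?thesis using m4 by simp
  qed
  have modm1: "(m + 1) mod m = 1" using m4 by (simp add: mod_Suc)
  have ax: "dcon_axioms G x m D {2, m - 1}"
  proof (unfold dcon_axioms_def N_def[symmetric], intro conjI allI impI iffI)
    fix i assume i: "i < m"
    show "D i \<subseteq> {..<N}" using bound by fastforce
    show "card (D i) = 3" using icases[of i] N2 m4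
      by (auto simp: D0 D1 D1' D2 D3 D4 intro!: card3)
    show "1 \<in> D i" by (simp add: D_def)
    show "i = 0" if h: "\<forall>e\<in>{2, m - 1}. \<exists>d\<in>D i. d = e mod N"
    proof (rule ccontr)
      assume i0: "i \<noteq> 0"
      have "2 mod N = 2" "(m - 1) mod N = m - 1" using N2 m4 by auto
      hence "2 \<in> D i" "m - 1 \<in> D i" using h by auto
      thus False using icases[of i] i0 N2 m4 by (auto simp: D0 D1 D1' D2 D3 D4)
    qed
    show "\<forall>e\<in>{2, m - 1}. \<exists>d\<in>D i. d = e mod N" if "i = 0"
      using that N2 m4 by (simp add: D0)
  next
    fix i d assume i: "i < m" and d: "d \<in> D i"
    show "d mod m \<noteq> 0" using icases[of i] d m4 modN2 modm1 by (auto simp: D0 D1 D1' D2 D3 D4)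
  next
    fix i d' assume "i < m" "d' \<in> D (Suc i mod m)"
    thus "Suc d' mod N \<noteq> 0" using bound[of d'] by simp
  next
    fix i d assume i: "i < m" and d: "d \<in> D i" and d1: "d \<noteq> 1"
    have dN: "d < N" using bound[OF d] by simp
    show "\<exists>d'\<in>D ((i + d) mod m). (d + d') mod N = 0"
    proof (rule rec_helper[OF dN])
      consider "i = 0" "d = 2" | "i = 0" "d = m - 1" | "i = 1" "d = 2" | "i = 1" "d = m + 1"
        | "i = 2" "d = m - 1" | "i = 2" "d = N - 2" | "i = 3" "d = m + 1" | "i = 3" "d = N - 2"
        | "i \<ge> 4" "d = m - 1" | "i \<ge> 4" "d = m + 1"
        using icases[of i] d d1 by (auto simp: D0 D1 D1' D2 D3 D4)
      thus "N - d \<in> D ((i + d) mod m)"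
      proof cases
        case 1
        have "(i + d) mod m = 2" using 1 m4 by simp
        moreover have "N - d = N - 2" using 1 by simp
        ultimately show ?thesis by (simp only: D2) simp
      next
        case 2
        have "N - d = m + 1" using 2 N2 m4 by simp
        moreover have "(i + d) mod m = m - 1" using 2 m4 by simp
        ultimately show ?thesis using m4 by (cases "m = 4") (auto simp: D3 D4)
      next
        case 3
        have "(i + d) mod m = 3" using 3 m4 by simp
        moreover have "N - d = N - 2" using 3 by simp
        ultimately show ?thesis by (simp only: D3) simp
      next
        case 4
        have "(i + d) mod m = (2 + 1 * m) mod m" using 4 by simp
        also have "\<dots> = 2 mod m" by (rule mod_mult_self1)
        finally have "(i + d) mod m = 2" using m4 by simp
        moreover have "N - d = m - 1" using 4 N2 by simp
        ultimately show ?thesis by (simp add: D2)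
      next
        case 5
        have "(i + d) mod m = (1 + 1 * m) mod m" using 5 m4 by simp
        also have "\<dots> = 1 mod m" by (rule mod_mult_self1)
        finally have "(i + d) mod m = 1" using m4 by simp
        moreover have "N - d = m + 1" using 5 N2 m4 by simp
        ultimately show ?thesis by (simp add: D1 D1')
      next
        case 6
        have "i + d = 0 + 2 * m" using 6 N2 m4 by simp
        hence "(i + d) mod m = (0 + 2 * m) mod m" by (simp only:)
        also have "\<dots> = 0 mod m" by (rule mod_mult_self1)
        finally have "(i + d) mod m = 0" by simp
        moreover have "N - d = 2" using 6 N2 m4 by simp
        ultimately show ?thesis by (simp add: D0)
      next
        case 7
        have "(i + d) mod m = (4 + 1 * m) mod m" using 7 by simp
        also have "\<dots> = 4 mod m" by (rule mod_mult_self1)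
        finally have e: "(i + d) mod m = 4 mod m" .
        have "N - d = m - 1" using 7 N2 by simp
        thus ?thesis using e m4 by (cases "m = 4") (auto simp: D0 D4)
      next
        case 8
        have "i + d = 1 + 2 * m" using 8 N2 m4 by simp
        hence "(i + d) mod m = (1 + 2 * m) mod m" by (simp only:)
        also have "\<dots> = 1 mod m" by (rule mod_mult_self1)
        finally have "(i + d) mod m = 1" using m4 by simp
        moreover have "N - d = 2" using 8 N2 m4 by simp
        ultimately show ?thesis by (simp add: D1 D1')
      next
        case 9
        have "(i + d) mod m = ((i - 1) + 1 * m) mod m" using 9 m4 by simp
        also have "\<dots> = (i - 1) mod m" by (rule mod_mult_self1)
        finally have "(i + d) mod m = i - 1" using i by simp
        moreover have "N - d = m + 1" using 9 N2 m4 by simp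
        ultimately show ?thesis using 9 by (cases "i = 4") (auto simp: D3 D4)
      next
        case 10
        have "(i + d) mod m = ((i + 1) + 1 * m) mod m" using 10 by simp
        also have "\<dots> = (i + 1) mod m" by (rule mod_mult_self1)
        finally have e: "(i + d) mod m = (i + 1) mod m" .
        have "N - d = m - 1" using 10 N2 by simp
        thus ?thesis using e 10 i by (cases "i + 1 = m") (auto simp: D0 D4)
      qed
    qed
  qed
  thus ?thesis by (rule dcon_intro)
qed

end

context cycg
begin

lemma out_card_gen:
  assumes T: "\<forall>i<m. \<forall>j<m. T i j \<subseteq> carrier G" and i: "i < m"
  shows "card {w. ((\<one>, i), w) \<in> mcay_arcs G m T} = (\<Sum>j<m. card (T i j))"
proof -
  have "{w. ((\<one>, i), w) \<in> mcay_arcs G m T} = (\<lambda>(j, t). (t, j)) ` (SIGMA j:{..<m}. T i j)"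
  proof (intro Set.set_eqI iffI)
    fix w assume "w \<in> {w. ((\<one>, i), w) \<in> mcay_arcs G m T}"
    then obtain g j where w: "w = (g, j)" "j < m" "g \<in> carrier G" "g \<in> T i j"
      using arc_char[OF T, of \<one> i "fst w" "snd w"] by (cases w) auto
    thus "w \<in> (\<lambda>(j, t). (t, j)) ` (SIGMA j:{..<m}. T i j)" by force
  next
    fix w assume "w \<in> (\<lambda>(j, t). (t, j)) ` (SIGMA j:{..<m}. T i j)"
    then obtain j t where w: "w = (t, j)" "j < m" "t \<in> T i j" by auto
    hence tc: "t \<in> carrier G" using T i by blast
    thus "w \<in> {w. ((\<one>, i), w) \<in> mcay_arcs G m T}"
      using w i arc_char[OF T, of \<one> i t j] by simp
  qed
  moreover have "inj_on (\<lambda>(j, t). (t, j)) (SIGMA j:{..<m}. T i j)"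
    by (auto simp: inj_on_def)
  moreover have "\<forall>j\<in>{..<m}. finite (T i j)"
  proof
    fix j assume "j \<in> {..<m}"
    hence "T i j \<subseteq> carrier G" using T i by simp
    thus "finite (T i j)" using fin by (rule finite_subset)
  qed
  ultimately show ?thesis by (simp add: card_image)
qed

lemma in_card_gen:
  assumes T: "\<forall>i<m. \<forall>j<m. T i j \<subseteq> carrier G" and j: "j < m"
  shows "card {u. (u, (\<one>, j)) \<in> mcay_arcs G m T} = (\<Sum>i<m. card (T i j))"
proof -
  have "{u. (u, (\<one>, j)) \<in> mcay_arcs G m T} = (\<lambda>(i, t). (inv t, i)) ` (SIGMA i:{..<m}. T i j)"
  proof (intro Set.set_eqI iffI)
    fix u assume "u \<in> {u. (u, (\<one>, j)) \<in> mcay_arcs G m T}"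
    then obtain g i where u: "u = (g, i)" "i < m" "g \<in> carrier G" "inv g \<in> T i j"
      using arc_char[OF T, of "fst u" "snd u" \<one> j] by (cases u) auto
    hence "u = (inv (inv g), i)" by simp
    thus "u \<in> (\<lambda>(i, t). (inv t, i)) ` (SIGMA i:{..<m}. T i j)" using u by force
  next
    fix u assume "u \<in> (\<lambda>(i, t). (inv t, i)) ` (SIGMA i:{..<m}. T i j)"
    then obtain i t where u: "u = (inv t, i)" "i < m" "t \<in> T i j" by auto
    hence tc: "t \<in> carrier G" using T j by blast
    thus "u \<in> {u. (u, (\<one>, j)) \<in> mcay_arcs G m T}"
      using u j arc_char[OF T, of "inv t" i \<one> j] by simp
  qed
  moreover have "inj_on (\<lambda>(i, t). (inv t, i)) (SIGMA i:{..<m}. T i j)"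
  proof (rule inj_onI)
    fix a b assume "a \<in> (SIGMA i:{..<m}. T i j)" "b \<in> (SIGMA i:{..<m}. T i j)"
      "(\<lambda>(i, t). (inv t, i)) a = (\<lambda>(i, t). (inv t, i)) b"
    moreover obtain i1 t1 where a: "a = (i1, t1)" "i1 < m" "t1 \<in> T i1 j"
      using calculation(1) by auto
    moreover obtain i2 t2 where b: "b = (i2, t2)" "i2 < m" "t2 \<in> T i2 j"
      using calculation(2) by auto
    moreover have c1: "t1 \<in> carrier G" using a(2,3) T j by auto
    moreover have c2: "t2 \<in> carrier G" using b(2,3) T j by auto
    ultimately have "(inv t1, i1) = (inv t2, i2)" by simp
    hence e: "inv t1 = inv t2" "i1 = i2" by auto
    have "t1 = inv (inv t1)" using c1 by simp
    also have "\<dots> = t2" using e c2 by simp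
    finally show "a = b" using a b e by simp
  qed
  moreover have "\<forall>i\<in>{..<m}. finite (T i j)"
  proof
    fix i assume "i \<in> {..<m}"
    hence "T i j \<subseteq> carrier G" using T j by simp
    thus "finite (T i j)" using fin by (rule finite_subset)
  qed
  ultimately show ?thesis by (simp add: card_image)
qed

lemma perm_aut:
  assumes T: "\<forall>i<m. \<forall>j<m. T i j \<subseteq> carrier G"
    and pi: "inj_on \<pi> {..<m}" "\<pi> ` {..<m} \<subseteq> {..<m}"
    and c: "\<And>i. i < m \<Longrightarrow> c i \<in> carrier G"
    and cond: "\<And>i j s. i < m \<Longrightarrow> j < m \<Longrightarrow> s \<in> carrier G \<Longrightarrow>
                 s \<in> T i j \<longleftrightarrow> c j \<otimes> inv (c i) \<otimes> s \<in> T (\<pi> i) (\<pi> j)"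
  shows "restrict (\<lambda>v. (c (snd v) \<otimes> fst v, \<pi> (snd v))) V \<in> digraph_auts V (mcay_arcs G m T)"
proof -
  let ?s = "restrict (\<lambda>v. (c (snd v) \<otimes> fst v, \<pi> (snd v))) V"
  have into: "?s ` V \<subseteq> V" using pi c by (auto simp: mcay_verts_def)
  have inj: "inj_on ?s V"
  proof (rule inj_onI)
    fix u w assume u: "u \<in> V" and w: "w \<in> V" and e: "?s u = ?s w"
    have "\<pi> (snd u) = \<pi> (snd w)" using e u w by simp
    hence sn: "snd u = snd w" using pi(1) u w by (auto simp: inj_on_def mcay_verts_def)
    have "c (snd u) \<otimes> fst u = c (snd u) \<otimes> fst w" using e u w sn by simp
    hence "fst u = fst w" using u w c by (auto simp: mcay_verts_def)
    thus "u = w" using sn by (simp add: prod_eq_iff)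
  qed
  have bij: "bij_betw ?s V V"
    using endo_inj_surj[OF finite_V into inj] inj by (simp add: bij_betw_def)
  have arcs: "(u, w) \<in> mcay_arcs G m T \<longleftrightarrow> (?s u, ?s w) \<in> mcay_arcs G m T"
    if "u \<in> V" "w \<in> V" for u w
  proof -
    obtain g i where u: "u = (g, i)" "g \<in> carrier G" "i < m" using \<open>u \<in> V\<close>
      by (cases u) (auto simp: mcay_verts_def)
    obtain g' j where w: "w = (g', j)" "g' \<in> carrier G" "j < m" using \<open>w \<in> V\<close>
      by (cases w) (auto simp: mcay_verts_def)
    have ci: "c i \<in> carrier G" and cj: "c j \<in> carrier G" using c u w by auto
    have e: "(c j \<otimes> g') \<otimes> inv (c i \<otimes> g) = c j \<otimes> inv (c i) \<otimes> (g' \<otimes> inv g)"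
    proof -
      have "(c j \<otimes> g') \<otimes> inv (c i \<otimes> g) = c j \<otimes> g' \<otimes> (inv g \<otimes> inv (c i))"
        using ci cj u w by (simp add: inv_mult_group)
      also have "\<dots> = c j \<otimes> (g' \<otimes> inv g) \<otimes> inv (c i)"
        using ci cj u w by (simp add: m_assoc)
      also have "\<dots> = c j \<otimes> (inv (c i) \<otimes> (g' \<otimes> inv g))"
        using ci cj u w comm[of "g' \<otimes> inv g" "inv (c i)"] by (simp add: m_assoc)
      also have "\<dots> = c j \<otimes> inv (c i) \<otimes> (g' \<otimes> inv g)"
        using ci cj u w by (simp add: m_assoc)
      finally show ?thesis .
    qed
    have pij: "\<pi> i < m" "\<pi> j < m" using pi u w by auto
    show ?thesis
      using u w that ci cj pij e cond[OF u(3) w(3), of "g' \<otimes> inv g"]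
      by (simp add: arc_char[OF T])
  qed
  have "?s \<in> extensional V" by simp
  thus ?thesis unfolding digraph_auts_def mem_Collect_eq using bij arcs by blast
qed

end

context cycg
begin

lemma cancel3:
  assumes "a \<in> carrier G" "b \<in> carrier G" "s \<in> carrier G"
  shows "b \<otimes> inv a \<otimes> s = b \<longleftrightarrow> s = a"
proof
  assume h: "b \<otimes> inv a \<otimes> s = b"
  have "b \<otimes> (inv a \<otimes> s) = b \<otimes> inv a \<otimes> s" using assms by (simp add: m_assoc)
  also have "\<dots> = b" by (rule h)
  also have "\<dots> = b \<otimes> \<one>" using assms by simp
  finally have e0: "b \<otimes> (inv a \<otimes> s) = b \<otimes> \<one>" .
  have e: "inv a \<otimes> s = \<one>"
    using l_cancel[OF e0] assms by simp
  have "s = a \<otimes> (inv a \<otimes> s)" using assms by (simp add: m_assoc[symmetric])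
  also have "\<dots> = a" using e assms by simp
  finally show "s = a" .
next
  assume "s = a" thus "b \<otimes> inv a \<otimes> s = b" using assms by (simp add: m_assoc)
qed

lemma card_T_le: "T \<subseteq> carrier G \<Longrightarrow> card T \<le> n"
  using n_card fin card_mono by metis

lemma card_T_full: "T \<subseteq> carrier G \<Longrightarrow> card T = n \<Longrightarrow> T = carrier G"
  using n_card fin card_subset_eq by metis

lemma regular_sums:
  assumes T: "\<forall>i<m. \<forall>j<m. T i j \<subseteq> carrier G"
    and reg: "regular_digraph V (mcay_arcs G m T) 3" and i: "i < m"
  shows "(\<Sum>j<m. card (T i j)) = 3" "(\<Sum>j<m. card (T j i)) = 3"
proof -
  have v: "(\<one>, i) \<in> V" using i by (simp add: mcay_verts_def)
  show "(\<Sum>j<m. card (T i j)) = 3"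
    using reg v out_card_gen[OF T i] unfolding regular_digraph_def by metis
  show "(\<Sum>j<m. card (T j i)) = 3"
    using reg v in_card_gen[OF T i] unfolding regular_digraph_def by metis
qed

lemma nec_m2:
  assumes m2': "m = 2" and n5: "n < 5"
  shows "\<not> admits_mPDR G m 3"
proof
  assume "admits_mPDR G m 3"
  then obtain T where T: "\<forall>i<m. \<forall>j<m. T i j \<subseteq> carrier G" and Td: "\<forall>i<m. T i i = {}"
    and reg: "regular_digraph V (mcay_arcs G m T) 3"
    and iso: "G \<cong> Aut_digraph V (mcay_arcs G m T)"
    unfolding admits_mPDR_def by blast
  have s2: "{..<m} = {0, 1::nat}" using m2' by auto
  have T00: "T 0 0 = {}" and T11: "T 1 1 = {}" using Td m2' by auto
  have T01s: "T 0 1 \<subseteq> carrier G" and T10s: "T 1 0 \<subseteq> carrier G" using T m2' by auto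
  have c01: "card (T 0 1) = 3" using regular_sums(1)[OF T reg, of 0] m2' s2 T00 by simp
  have c10: "card (T 1 0) = 3" using regular_sums(1)[OF T reg, of 1] m2' s2 T11 by simp
  have "3 \<le> n" using card_T_le[OF T01s] c01 by simp
  hence n34: "n = 3 \<or> n = 4" using n5 by arith
  obtain c where cc: "c \<in> carrier G" and cond01: "\<And>s. s \<in> carrier G \<Longrightarrow> s \<in> T 0 1 \<longleftrightarrow> c \<otimes> s \<in> T 1 0"
  proof (cases "n = 3")
    case True
    have "T 0 1 = carrier G" using card_T_full[OF T01s] c01 True by simp
    moreover have "T 1 0 = carrier G" using card_T_full[OF T10s] c10 True by simp
    ultimately show ?thesis using that[of \<one>] by simp
  next
    case False
    hence n4: "n = 4" using n34 by simp
    have "T 0 1 \<noteq> carrier G" using c01 n4 n_card by auto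
    then obtain a where a: "a \<in> carrier G" "a \<notin> T 0 1" using T01s by blast
    have "card (carrier G - {a}) = 3" using a n4 n_card fin by simp
    hence Ta: "T 0 1 = carrier G - {a}"
      using T01s a c01 fin card_subset_eq[of "carrier G - {a}" "T 0 1"] by auto
    have "T 1 0 \<noteq> carrier G" using c10 n4 n_card by auto
    then obtain b where b: "b \<in> carrier G" "b \<notin> T 1 0" using T10s by blast
    have "card (carrier G - {b}) = 3" using b n4 n_card fin by simp
    hence Tb: "T 1 0 = carrier G - {b}"
      using T10s b c10 fin card_subset_eq[of "carrier G - {b}" "T 1 0"] by auto
    show ?thesis
    proof (rule that[of "b \<otimes> inv a"])
      show "b \<otimes> inv a \<in> carrier G" using a b by simp
      fix s assume s: "s \<in> carrier G"
      show "s \<in> T 0 1 \<longleftrightarrow> b \<otimes> inv a \<otimes> s \<in> T 1 0"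
        using Ta Tb s a b cancel3[OF a(1) b(1) s] by auto
    qed
  qed
  define c' where "c' = (\<lambda>i::nat. if i = 0 then \<one> else c)"
  define \<pi> where "\<pi> = (\<lambda>i::nat. 1 - i)"
  have aut: "restrict (\<lambda>v. (c' (snd v) \<otimes> fst v, \<pi> (snd v))) V \<in> digraph_auts V (mcay_arcs G m T)"
  proof (rule perm_aut[OF T])
    show "inj_on \<pi> {..<m}" "\<pi> ` {..<m} \<subseteq> {..<m}" using s2 by (auto simp: \<pi>_def inj_on_def)
    show "c' i \<in> carrier G" for i using cc by (simp add: c'_def)
    fix i j s assume i: "i < m" and j: "j < m" and s: "s \<in> carrier G"
    have ij: "i = 0 \<or> i = 1" "j = 0 \<or> j = 1" using i j m2' by auto
    have cs: "c \<otimes> (inv c \<otimes> s) = s" using cc s by (simp add: m_assoc[symmetric])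
    have ics: "inv c \<otimes> s \<in> carrier G" using cc s by simp
    have e1: "c' 1 \<otimes> inv (c' 0) \<otimes> s = c \<otimes> s" using cc s by (simp add: c'_def)
    have e2: "c' 0 \<otimes> inv (c' 1) \<otimes> s = inv c \<otimes> s" using cc s by (simp add: c'_def)
    have p0: "\<pi> 0 = 1" "\<pi> 1 = 0" by (simp_all add: \<pi>_def)
    show "s \<in> T i j \<longleftrightarrow> c' j \<otimes> inv (c' i) \<otimes> s \<in> T (\<pi> i) (\<pi> j)"
    proof -
      consider "i = 0" "j = 0" | "i = 0" "j = 1" | "i = 1" "j = 0" | "i = 1" "j = 1" using ij by blast
      thus ?thesis
      proof cases
        case 1 thus ?thesis using T00 T11 p0 by simp
      next
        case 2 thus ?thesis using e1 p0 cond01[OF s] by simp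
      next
        case 3
        have "inv c \<otimes> s \<in> T 0 1 \<longleftrightarrow> s \<in> T 1 0" using cond01[OF ics] cs by simp
        thus ?thesis using 3 e2 p0 by simp
      next
        case 4 thus ?thesis using T00 T11 p0 by simp
      qed
    qed
  qed
  have v0: "(\<one>, 0) \<in> V" using m2' by (simp add: mcay_verts_def)
  have "restrict (\<lambda>v. (c' (snd v) \<otimes> fst v, \<pi> (snd v))) V (\<one>, 0) = (c' 0 \<otimes> \<one>, \<pi> 0)"
    using v0 by (simp only: restrict_apply' fst_conv snd_conv)
  hence "snd (restrict (\<lambda>v. (c' (snd v) \<otimes> fst v, \<pi> (snd v))) V (\<one>, 0)) \<noteq> 0"
    by (simp add: \<pi>_def)
  with not_iso[OF T aut] iso show False by simp
qed

lemma single_T: "T \<subseteq> carrier G \<Longrightarrow> card T = 1 \<Longrightarrow> \<exists>c\<in>carrier G. T = {c}"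
  by (metis card_1_singletonE insert_subset)

lemma nec_m3:
  assumes m3': "m = 3" and n2: "n = 2"
  shows "\<not> admits_mPDR G m 3"
proof
  assume "admits_mPDR G m 3"
  then obtain T where T: "\<forall>i<m. \<forall>j<m. T i j \<subseteq> carrier G" and Td: "\<forall>i<m. T i i = {}"
    and reg: "regular_digraph V (mcay_arcs G m T) 3"
    and iso: "G \<cong> Aut_digraph V (mcay_arcs G m T)"
    unfolding admits_mPDR_def by blast
  have s3: "{..<m} = {0, 1, 2::nat}" using m3' by auto
  have T00: "T 0 0 = {}" and T11: "T 1 1 = {}" and T22: "T 2 2 = {}" using Td m3' by auto
  have Ts: "T i j \<subseteq> carrier G" if "i < 3" "j < 3" for i j using T m3' that by auto
  have le: "card (T i j) \<le> 2" if "i < 3" "j < 3" for i j using card_T_le[OF Ts[OF that]] n2 by simp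
  have r: "card (T i 0) + card (T i 1) + card (T i 2) = 3" if "i < 3" for i
    using regular_sums(1)[OF T reg, of i] that m3' s3 by (simp add: Td)
  have c: "card (T 0 j) + card (T 1 j) + card (T 2 j) = 3" if "j < 3" for j
    using regular_sums(2)[OF T reg, of j] that m3' s3 by (simp add: Td)
  have r0: "card (T 0 1) + card (T 0 2) = 3" using r[of 0] T00 by simp
  have r1: "card (T 1 0) + card (T 1 2) = 3" using r[of 1] T11 by simp
  have r2: "card (T 2 0) + card (T 2 1) = 3" using r[of 2] T22 by simp
  have c0: "card (T 1 0) + card (T 2 0) = 3" using c[of 0] T00 by simp
  have c1: "card (T 0 1) + card (T 2 1) = 3" using c[of 1] T11 by simp
  have l02: "card (T 0 2) \<le> 2" and l01: "card (T 0 1) \<le> 2" using le by auto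
  have full: "T i j = carrier G" if "i < 3" "j < 3" "card (T i j) = 2" for i j
    using card_T_full[OF Ts[OF that(1,2)]] that(3) n2 by simp
  have sing: "\<exists>c\<in>carrier G. T i j = {c}" if "i < 3" "j < 3" "card (T i j) = 1" for i j
    using single_T[OF Ts[OF that(1,2)] that(3)] .
  have cancel_cond: "s \<in> {a} \<longleftrightarrow> b \<otimes> inv a \<otimes> s \<in> {b}"
    if "a \<in> carrier G" "b \<in> carrier G" "s \<in> carrier G" for a b s
    using cancel3[OF that] by auto
  have mc: "k \<otimes> s \<in> carrier G" if "k \<in> carrier G" "s \<in> carrier G" for k s using that by simp
  have i3: "i < m \<Longrightarrow> i = 0 \<or> i = 1 \<or> i = 2" for i using m3' by auto
  consider "card (T 0 1) = 2" | "card (T 0 1) = 1" using r0 l01 l02 by arith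
  thus False
  proof cases
    case 1
    have F01: "T 0 1 = carrier G" using full 1 by simp
    have F12: "T 1 2 = carrier G" using full r0 r1 c1 r2 c0 1 by simp
    have F20: "T 2 0 = carrier G" using full r0 r1 c1 r2 c0 1 by simp
    obtain c1' where C1: "c1' \<in> carrier G" "T 0 2 = {c1'}" using sing[of 0 2] r0 1 by auto
    obtain c2' where C2: "c2' \<in> carrier G" "T 2 1 = {c2'}" using sing[of 2 1] c1 1 by auto
    obtain c3' where C3: "c3' \<in> carrier G" "T 1 0 = {c3'}" using sing[of 1 0] c0 r2 c1 1 by auto
    define c' where "c' = (\<lambda>i::nat. if i = 0 then c1' else if i = 1 then c3' else c2')"
    define \<pi> where "\<pi> = (\<lambda>i::nat. (i + 2) mod 3)"
    have aut: "restrict (\<lambda>v. (c' (snd v) \<otimes> fst v, \<pi> (snd v))) V \<in> digraph_auts V (mcay_arcs G m T)"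
    proof (rule perm_aut[OF T])
      show "inj_on \<pi> {..<m}" "\<pi> ` {..<m} \<subseteq> {..<m}" using s3 by (auto simp: \<pi>_def inj_on_def)
      show "c' i \<in> carrier G" for i using C1 C2 C3 by (simp add: c'_def)
      fix i j s assume i: "i < m" and j: "j < m" and s: "s \<in> carrier G"
      have cv: "c' 0 = c1'" "c' 1 = c3'" "c' 2 = c2'" by (simp_all add: c'_def)
      have pv: "\<pi> 0 = 2" "\<pi> 1 = 0" "\<pi> 2 = 1" by (simp_all add: \<pi>_def)
      have sv: "c' (Suc 0) = c3'" "\<pi> (Suc 0) = 0" "T (Suc 0) (Suc 0) = {}" "T 2 (Suc 0) = {c2'}"
        "T (Suc 0) 0 = {c3'}" "T 0 (Suc 0) = carrier G" "T (Suc 0) 2 = carrier G"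
        using T11 C2 C3 F01 F12 by (simp_all add: c'_def \<pi>_def)
      show "s \<in> T i j \<longleftrightarrow> c' j \<otimes> inv (c' i) \<otimes> s \<in> T (\<pi> i) (\<pi> j)"
        using i3[OF i] i3[OF j] apply (elim disjE)
        by (simp_all add: cv pv sv F01 F12 F20 C1 C2 C3 T00 T11 T22 s cancel3)
    qed
    have v0: "(\<one>, 0) \<in> V" using m3' by (simp add: mcay_verts_def)
    have "restrict (\<lambda>v. (c' (snd v) \<otimes> fst v, \<pi> (snd v))) V (\<one>, 0) = (c' 0 \<otimes> \<one>, \<pi> 0)"
      using v0 by (simp only: restrict_apply' fst_conv snd_conv)
    hence "snd (restrict (\<lambda>v. (c' (snd v) \<otimes> fst v, \<pi> (snd v))) V (\<one>, 0)) \<noteq> 0"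
      by (simp add: \<pi>_def)
    with not_iso[OF T aut] iso show False by simp
  next
    case 2
    have F02: "T 0 2 = carrier G" using full r0 2 by simp
    have F21: "T 2 1 = carrier G" using full c1 2 by simp
    have F10: "T 1 0 = carrier G" using full r0 r1 c1 r2 c0 2 by simp
    obtain c1' where C1: "c1' \<in> carrier G" "T 0 1 = {c1'}" using sing[of 0 1] 2 by auto
    obtain c2' where C2: "c2' \<in> carrier G" "T 1 2 = {c2'}" using sing[of 1 2] r0 r1 c1 r2 c0 2 by auto
    obtain c3' where C3: "c3' \<in> carrier G" "T 2 0 = {c3'}" using sing[of 2 0] r0 r1 c1 r2 c0 2 by auto
    define c' where "c' = (\<lambda>i::nat. if i = 0 then c1' else if i = 1 then c2' else c3')"
    define \<pi> where "\<pi> = (\<lambda>i::nat. (i + 1) mod 3)"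
    have aut: "restrict (\<lambda>v. (c' (snd v) \<otimes> fst v, \<pi> (snd v))) V \<in> digraph_auts V (mcay_arcs G m T)"
    proof (rule perm_aut[OF T])
      show "inj_on \<pi> {..<m}" "\<pi> ` {..<m} \<subseteq> {..<m}" using s3 by (auto simp: \<pi>_def inj_on_def)
      show "c' i \<in> carrier G" for i using C1 C2 C3 by (simp add: c'_def)
      fix i j s assume i: "i < m" and j: "j < m" and s: "s \<in> carrier G"
      have cv: "c' 0 = c1'" "c' 1 = c2'" "c' 2 = c3'" by (simp_all add: c'_def)
      have pv: "\<pi> 0 = 1" "\<pi> 1 = 2" "\<pi> 2 = 0" by (simp_all add: \<pi>_def)
      have sv: "c' (Suc 0) = c2'" "\<pi> (Suc 0) = 2" "T (Suc 0) (Suc 0) = {}" "T 2 (Suc 0) = carrier G"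
        "T (Suc 0) 0 = carrier G" "T 0 (Suc 0) = {c1'}" "T (Suc 0) 2 = {c2'}"
        using T11 C1 C2 F21 F10 by (simp_all add: c'_def \<pi>_def)
      show "s \<in> T i j \<longleftrightarrow> c' j \<otimes> inv (c' i) \<otimes> s \<in> T (\<pi> i) (\<pi> j)"
        using i3[OF i] i3[OF j] apply (elim disjE)
        by (simp_all add: cv pv sv F02 F21 F10 C1 C2 C3 T00 T11 T22 s cancel3)
    qed
    have v0: "(\<one>, 0) \<in> V" using m3' by (simp add: mcay_verts_def)
    have "restrict (\<lambda>v. (c' (snd v) \<otimes> fst v, \<pi> (snd v))) V (\<one>, 0) = (c' 0 \<otimes> \<one>, \<pi> 0)"
      using v0 by (simp only: restrict_apply' fst_conv snd_conv)
    hence "snd (restrict (\<lambda>v. (c' (snd v) \<otimes> fst v, \<pi> (snd v))) V (\<one>, 0)) \<noteq> 0"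
      by (simp add: \<pi>_def)
    with not_iso[OF T aut] iso show False by simp
  qed
qed

end

theorem theorem1p1:
  fixes G :: "('a, 'b) monoid_scheme" and x :: 'a and m :: nat
  assumes "group G" and "finite (carrier G)"
    and "x \<in> carrier G" and "generate G {x} = carrier G"
    and "carrier G \<noteq> {\<one>\<^bsub>G\<^esub>}"
    and "m \<ge> 2"
  shows "admits_mPDR G m 3 \<longleftrightarrow>
           \<not> (m = 2 \<and> group.ord G x < 5) \<and> \<not> (m = 3 \<and> group.ord G x = 2)"
proof -
  have "cycg G x m" using assms by (simp add: cycg_def cycg_axioms_def)
  then interpret C: cycg G x m .
  have n2: "group.ord G x \<ge> 2" using C.n_ge2 .
  show ?thesis
  proof
    assume a: "admits_mPDR G m 3"
    show "\<not> (m = 2 \<and> group.ord G x < 5) \<and> \<not> (m = 3 \<and> group.ord G x = 2)"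
      using a C.nec_m2 C.nec_m3 by blast
  next
    assume h: "\<not> (m = 2 \<and> group.ord G x < 5) \<and> \<not> (m = 3 \<and> group.ord G x = 2)"
    consider "m = 2" | "m = 3" | "m \<ge> 4" using assms(6) by arith
    thus "admits_mPDR G m 3"
    proof cases
      case 1 thus ?thesis using h C.caseA by simp
    next
      case 2
      hence "group.ord G x \<ge> 3" using h n2 by simp
      thus ?thesis using 2 C.caseB by simp
    next
      case 3
      show ?thesis
      proof (cases "group.ord G x = 2")
        case True thus ?thesis using 3 C.caseC by simp
      next
        case False thus ?thesis using 3 n2 C.caseB by simp
      qed
    qed
  qed
qed


end
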